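(* Let $P,P',Q,S,\gamma$ be programs and $B$ a Boolean expression such that $P'\equiv_B(P,B)$ and $Q\equiv_B(P,\neg B)$. If the operational triple $\{|P'|\}\ S\ \{|\gamma;P|\}$ holds, then $\{|P|\}\ \mathbf{while}\ (B)\ \mathbf{do}\ S\ \mathbf{elihw}\ \{|Q|\}$ holds.
   Context: Programs are statements of a sequential imperative language with a standard small-step operational semantics over program states. $\mathrm{behs}(P)$ is the set of pairs (initial state, final state) of finite terminating executions of $P$; $(s,u)\in\mathrm{behs}(P;Q)$ iff there is $t$ with $(s,t)\in\mathrm{behs}(P)$ and $(t,u)\in\mathrm{behs}(Q)$. For a state $s$ and Boolean expression $B$, $s(B)\in\{\mathit{tt},\mathit{ff}\}$ is the (side-effect-free) value of $B$ in $s$. The loop $\mathbf{while}\ (B)\ \mathbf{do}\ S\ \mathbf{elihw}$ started in state $s$ terminates in $s$ if $s(B)=\mathit{ff}$, and otherwise executes $S$ and then repeats the loop from the resulting state. The post-state set is $\mathrm{pst}(P)=\{t:\exists s,\ (s,t)\in\mathrm{behs}(P)\}$. The operational triple $\{|P|\}\ S\ \{|Q|\}$ means $\mathrm{pst}(P;S)\subseteq\mathrm{pst}(Q)$. For programs $P',P$ and Boolean expression $B$, $P'\equiv_B(P,B)$ means $\mathrm{pst}(P')=\mathrm{pst}(P)\cap\{s : s(B)=\mathit{tt}\}$. *)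

theory Defs
  imports Main
begin

text \<open>Boolean expressions are side-effect-free state predicates; atomic statements
  (assignments, possibly nondeterministic) are given by a state relation.\<close>

type_synonym 's bexp = "'s \<Rightarrow> bool"

datatype 's com =
    Skip
  | Basic "('s \<times> 's) set"
  | Seq "'s com" "'s com"
  | If "'s bexp" "'s com" "'s com"
  | While "'s bexp" "'s com"

inductive step :: "'s com \<times> 's \<Rightarrow> 's com \<times> 's \<Rightarrow> bool" where
  Basic: "(s, t) \<in> R \<Longrightarrow> step (Basic R, s) (Skip, t)"
| Seq1: "step (Seq Skip c2, s) (c2, s)"
| Seq2: "step (c1, s) (c1', t) \<Longrightarrow> step (Seq c1 c2, s) (Seq c1' c2, t)"
| IfT: "b s \<Longrightarrow> step (If b c1 c2, s) (c1, s)"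
| IfF: "\<not> b s \<Longrightarrow> step (If b c1 c2, s) (c2, s)"
| While: "step (While b c, s) (If b (Seq c (While b c)) Skip, s)"

definition behs :: "'s com \<Rightarrow> ('s \<times> 's) set" where
  "behs P = {(s, t). step\<^sup>*\<^sup>* (P, s) (Skip, t)}"

definition pst :: "'s com \<Rightarrow> 's set" where
  "pst P = {t. \<exists>s. (s, t) \<in> behs P}"

definition op_triple :: "'s com \<Rightarrow> 's com \<Rightarrow> 's com \<Rightarrow> bool" where
  "op_triple P S Q \<longleftrightarrow> pst (Seq P S) \<subseteq> pst Q"

definition equiv_B :: "'s com \<Rightarrow> 's com \<Rightarrow> 's bexp \<Rightarrow> bool" where
  "equiv_B P' P B \<longleftrightarrow> pst P' = pst P \<inter> {s. B s}"

end

theory Submission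
  imports Defs
begin

lemma skip_nostep: "\<not> step (Skip, s) x"
  by (auto elim: step.cases)

lemma skip_pow: "(step ^^ n) (Skip, s) (Skip, u) \<Longrightarrow> u = s"
proof (cases n)
  case (Suc m)
  assume "(step ^^ n) (Skip, s) (Skip, u)"
  then show ?thesis using Suc relpowp_Suc_D2 skip_nostep by metis
qed auto

lemma seq_decomp:
  "(step ^^ n) (Seq c1 c2, s) (Skip, u) \<Longrightarrow>
   \<exists>t m k. (step ^^ m) (c1, s) (Skip, t) \<and> (step ^^ k) (c2, t) (Skip, u) \<and> k < n"
proof (induction n arbitrary: c1 s)
  case 0
  then show ?case by simp
next
  case (Suc n)
  from relpowp_Suc_D2[OF Suc.prems] obtain y where y: "step (Seq c1 c2, s) y" "(step ^^ n) y (Skip, u)" by blast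
  from y(1) show ?case
  proof (cases rule: step.cases)
    case Seq1
    then show ?thesis using y(2) by (metis lessI relpowp_0_I)
  next
    case (Seq2 c1' t)
    with y(2) Suc.IH obtain t' m k where "(step ^^ m) (c1', t) (Skip, t')" "(step ^^ k) (c2, t') (Skip, u)" "k < n" by blast
    moreover have "(step ^^ Suc m) (c1, s) (Skip, t')"
      using Seq2 calculation(1) by (meson relpowp_Suc_I2)
    ultimately show ?thesis using less_SucI by blast
  qed
qed

lemma seq_decomp_star:
  "step\<^sup>*\<^sup>* (Seq c1 c2, s) (Skip, u) \<Longrightarrow>
   \<exists>t. step\<^sup>*\<^sup>* (c1, s) (Skip, t) \<and> step\<^sup>*\<^sup>* (c2, t) (Skip, u)"
  by (meson relpowp_imp_rtranclp rtranclp_imp_relpowp seq_decomp)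

lemma seq_lift: "step\<^sup>*\<^sup>* x y \<Longrightarrow> step\<^sup>*\<^sup>* (Seq (fst x) c2, snd x) (Seq (fst y) c2, snd y)"
proof (induction rule: rtranclp_induct)
  case base
  then show ?case by simp
next
  case (step y z)
  then show ?case
    by (metis (no_types, lifting) prod.collapse rtranclp.simps step.Seq2)
qed

lemma seq_comp:
  "step\<^sup>*\<^sup>* (c1, s) (Skip, t) \<Longrightarrow> step\<^sup>*\<^sup>* (c2, t) (Skip, u) \<Longrightarrow> step\<^sup>*\<^sup>* (Seq c1 c2, s) (Skip, u)"
proof -
  assume a: "step\<^sup>*\<^sup>* (c1, s) (Skip, t)" "step\<^sup>*\<^sup>* (c2, t) (Skip, u)"
  have "step\<^sup>*\<^sup>* (Seq c1 c2, s) (Seq Skip c2, t)" using seq_lift[OF a(1), of c2] by simp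
  also have "step (Seq Skip c2, t) (c2, t)" by (rule step.Seq1)
  finally show ?thesis using a(2) by simp
qed

lemma while_inv:
  assumes inv: "\<And>t u. I t \<Longrightarrow> B t \<Longrightarrow> step\<^sup>*\<^sup>* (S, t) (Skip, u) \<Longrightarrow> I u"
  shows "(step ^^ n) (While B S, s) (Skip, u) \<Longrightarrow> I s \<Longrightarrow> I u \<and> \<not> B u"
proof (induction n arbitrary: s rule: less_induct)
  case (less n)
  have ne0: "n \<noteq> 0" using less.prems(1) by (cases n) auto
  then obtain n' where n: "n = Suc n'" by (cases n) auto
  from less.prems(1) n have "(step ^^ Suc n') (While B S, s) (Skip, u)" by simp
  then obtain y where
    y: "step (While B S, s) y" "(step ^^ n') y (Skip, u)" by (blast dest: relpowp_Suc_D2)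
  from y(1) have yv: "y = (If B (Seq S (While B S)) Skip, s)" by (cases rule: step.cases) auto
  have "n' \<noteq> 0" using y(2) yv by (cases n') auto
  then obtain n'' where n': "n' = Suc n''" by (cases n') auto
  from y(2) n' yv have "(step ^^ Suc n'') (If B (Seq S (While B S)) Skip, s) (Skip, u)" by simp
  then obtain z where
    z: "step (If B (Seq S (While B S)) Skip, s) z" "(step ^^ n'') z (Skip, u)" by (blast dest: relpowp_Suc_D2)
  from z(1) show ?case
  proof (cases rule: step.cases)
    case IfT
    from z(2) IfT have "(step ^^ n'') (Seq S (While B S), s) (Skip, u)" by simp
    from seq_decomp[OF this] obtain t m k where
      tm: "(step ^^ m) (S, s) (Skip, t)" "(step ^^ k) (While B S, t) (Skip, u)" "k < n''" by blast
    have "step\<^sup>*\<^sup>* (S, s) (Skip, t)" using tm(1) by (rule relpowp_imp_rtranclp)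
    then have "I t" using inv[OF less.prems(2)] IfT by simp
    moreover have "k < n" using tm(3) n n' by simp
    ultimately show ?thesis using less.IH tm(2) by blast
  next
    case IfF
    from z(2) IfF have "(step ^^ n'') (Skip, s) (Skip, u)" by simp
    then have "u = s" by (rule skip_pow)
    then show ?thesis using IfF less.prems(2) by simp
  qed
qed

theorem theorem2:
  fixes P P' Q S \<gamma> :: "'s com" and B :: "'s bexp"
  assumes "equiv_B P' P B"
    and "equiv_B Q P (\<lambda>s. \<not> B s)"
    and "op_triple P' S (Seq \<gamma> P)"
  shows "op_triple P (While B S) Q"
proof -
  have inv: "u \<in> pst P" if "t \<in> pst P" "B t" "step\<^sup>*\<^sup>* (S, t) (Skip, u)" for t u
  proof -
    have "t \<in> pst P'" using assms(1) that(1,2) unfolding equiv_B_def by blast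
    then obtain s0 where "step\<^sup>*\<^sup>* (P', s0) (Skip, t)" unfolding pst_def behs_def by blast
    then have "step\<^sup>*\<^sup>* (Seq P' S, s0) (Skip, u)" using that(3) by (rule seq_comp)
    then have "u \<in> pst (Seq P' S)" unfolding pst_def behs_def by blast
    then have "u \<in> pst (Seq \<gamma> P)" using assms(3) unfolding op_triple_def by blast
    then obtain s0 where "step\<^sup>*\<^sup>* (Seq \<gamma> P, s0) (Skip, u)" unfolding pst_def behs_def by blast
    from seq_decomp_star[OF this] obtain s1 where "step\<^sup>*\<^sup>* (P, s1) (Skip, u)" by blast
    then show ?thesis unfolding pst_def behs_def by blast
  qed
  show ?thesis unfolding op_triple_def
  proof
    fix u assume "u \<in> pst (Seq P (While B S))"
    then obtain s0 where h0: "step\<^sup>*\<^sup>* (Seq P (While B S), s0) (Skip, u)" unfolding pst_def behs_def by blast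
    obtain s1 where s1: "step\<^sup>*\<^sup>* (P, s0) (Skip, s1)" "step\<^sup>*\<^sup>* (While B S, s1) (Skip, u)"
      using seq_decomp_star[OF h0] by blast
    have s1P: "s1 \<in> pst P" using s1(1) unfolding pst_def behs_def by blast
    obtain n where hn: "(step ^^ n) (While B S, s1) (Skip, u)" using rtranclp_imp_relpowp[OF s1(2)] by blast
    have "u \<in> pst P \<and> \<not> B u"
      by (rule while_inv[where I="\<lambda>x. x \<in> pst P", OF inv hn s1P])
    then show "u \<in> pst Q" using assms(2) unfolding equiv_B_def by blast
  qed
qed

end
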